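(* Let $\mathfrak t^*$ be the dual of the Lie algebra of a compact torus $T$, with weight lattice $T^*\subset \mathfrak t^*$. Let $f,g$ be measures on $\mathfrak t^*$, each a finite linear combination of cone terms, and suppose $f$ and $g$ are Fourier equivalent. If there is a pointy (i.e. proper, containing no line) cone $P$ such that $f$ and $g$ are both supported within $P$, then $f=g$.
   Context: For $\mu\in T^*$ and a finite multiset $\{\lambda\}$ of weights in $T^*$ lying in an open half-space, $\mathrm{cone}(\mu,\{\lambda\})$ denotes the pushforward of Lebesgue measure on $\mathbb R_{\ge 0}^{\{\lambda\}}$ under the map $(x_\lambda)\mapsto \mu+\sum_\lambda x_\lambda\lambda$; a cone term is any scalar multiple of such a measure. Two cone terms $C\cdot\mathrm{cone}(\mu,\{\lambda\})$ and $D\cdot\mathrm{cone}(\mu',\{\lambda'\})$ are Fourier equivalent if $\mu=\mu'$, the multisets $\{\lambda\}$ and $\{\lambda'\}$ agree after negating exactly $k$ of the weights, and $C=(-1)^kD$. Two linear combinations of cone terms are Fourier equivalent if one is obtained from the other by replacing terms by Fourier equivalent terms. *)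

theory Defs
  imports "HOL-Analysis.Analysis"
begin

text \<open>The dual Lie algebra t* of a compact torus of rank n is modelled as real^'n,
  with weight lattice T* the integer points.\<close>

definition weight_lattice :: "(real^'n) set" where
  "weight_lattice = {v. \<forall>i. v $ i \<in> \<int>}"

text \<open>Finite multisets of weights are represented by lists (order irrelevant).\<close>

definition in_open_halfspace :: "(real^'n) list \<Rightarrow> bool" where
  "in_open_halfspace ls \<longleftrightarrow> (\<exists>\<xi>. \<forall>l \<in> set ls. \<xi> \<bullet> l > 0)"

definition cone_measure :: "real^'n \<Rightarrow> (real^'n) list \<Rightarrow> (real^'n) measure" where
  "cone_measure \<mu> ls =
     distr (density (PiM {..<length ls} (\<lambda>_. lborel))
                    (indicator {x. \<forall>i<length ls. 0 \<le> x i}))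
           borel (\<lambda>x. \<mu> + (\<Sum>i<length ls. x i *\<^sub>R ls ! i))"

text \<open>A cone term C * cone(mu, ls) is a triple (C, mu, ls).\<close>


definition valid_cone_term :: "(real \<times> (real^'n) \<times> (real^'n) list) \<Rightarrow> bool" where
  "valid_cone_term t = (case t of (C, \<mu>, ls) \<Rightarrow>
      \<mu> \<in> weight_lattice \<and> set ls \<subseteq> weight_lattice \<and> in_open_halfspace ls)"

text \<open>Value of a cone term / a finite linear combination of cone terms on a set
  (as a signed Radon measure these are determined by bounded Borel sets,
  on which all the cone measures are finite).\<close>

definition cone_term_val :: "(real \<times> (real^'n) \<times> (real^'n) list) \<Rightarrow> (real^'n) set \<Rightarrow> real" where
  "cone_term_val t A = (case t of (C, \<mu>, ls) \<Rightarrow> C * measure (cone_measure \<mu> ls) A)"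

definition lincomb_val :: "(real \<times> (real^'n) \<times> (real^'n) list) list \<Rightarrow> (real^'n) set \<Rightarrow> real" where
  "lincomb_val ts A = (\<Sum>t\<leftarrow>ts. cone_term_val t A)"

definition lincomb_support :: "(real \<times> (real^'n) \<times> (real^'n) list) list \<Rightarrow> (real^'n) set" where
  "lincomb_support ts =
     {x. \<forall>e>0. \<exists>A \<in> sets borel. A \<subseteq> ball x e \<and> lincomb_val ts A \<noteq> 0}"

definition fourier_equiv_term :: "(real \<times> (real^'n) \<times> (real^'n) list) \<Rightarrow> (real \<times> (real^'n) \<times> (real^'n) list) \<Rightarrow> bool" where
  "fourier_equiv_term t t' = (case t of (C, \<mu>, ls) \<Rightarrow> case t' of (D, \<mu>', ls') \<Rightarrow>
      \<mu> = \<mu>' \<and>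
      (\<exists>flip :: bool list. length flip = length ls' \<and>
         mset ls = mset (map2 (\<lambda>b l. if b then - l else l) flip ls') \<and>
         C = (-1) ^ (length (filter id flip)) * D))"

definition fourier_equiv :: "(real \<times> (real^'n) \<times> (real^'n) list) list \<Rightarrow> (real \<times> (real^'n) \<times> (real^'n) list) list \<Rightarrow> bool" where
  "fourier_equiv fs gs \<longleftrightarrow> list_all2 fourier_equiv_term fs gs"

definition pointy_cone :: "(real^'n) set \<Rightarrow> bool" where
  "pointy_cone P \<longleftrightarrow> convex_cone P \<and> closed P \<and> (\<forall>x. x \<in> P \<and> - x \<in> P \<longrightarrow> x = 0)"

end

theory Submission
  imports Defs
begin


definition shift :: "'a::ab_group_add \<Rightarrow> 'a set \<Rightarrow> 'a set" where
  "shift v A = {x. x + v \<in> A}"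

lemma shift_0[simp]: "shift 0 A = A" by (simp add: shift_def)

lemma shift_shift: "shift u (shift v A) = shift (u + v) A"
  by (auto simp: shift_def algebra_simps)

lemma shift_image: "shift v A = (\<lambda>x. x - v) ` A"
proof
  show "shift v A \<subseteq> (\<lambda>x. x - v) ` A"
  proof
    fix x assume "x \<in> shift v A"
    then have "x + v \<in> A" by (simp add: shift_def)
    then show "x \<in> (\<lambda>x. x - v) ` A" by (rule rev_image_eqI) simp
  qed
qed (auto simp: shift_def)

lemma shift_bounded: "bounded A \<Longrightarrow> bounded (shift v (A::'a::real_normed_vector set))"
  unfolding shift_image by (rule bounded_translation_minus)

lemma shift_borel: "A \<in> sets borel \<Longrightarrow> shift v (A::'a::euclidean_space set) \<in> sets borel"
proof -
  assume A: "A \<in> sets borel"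
  have "shift v A = (\<lambda>x. x + v) -` A \<inter> space borel" by (auto simp: shift_def)
  also have "\<dots> \<in> sets borel" using A by measurable
  finally show ?thesis .
qed

definition Dop :: "'i set \<Rightarrow> ('i \<Rightarrow> 'a::ab_group_add) \<Rightarrow> ('a set \<Rightarrow> real) \<Rightarrow> 'a set \<Rightarrow> real" where
  "Dop I w \<phi> A = (\<Sum>S\<in>Pow I. (-1) ^ card S * \<phi> (shift (\<Sum>j\<in>S. w j) A))"

lemma Dop_insert:
  assumes "finite I" "i \<notin> I"
  shows "Dop (insert i I) w \<phi> A = Dop I w \<phi> A - Dop I w \<phi> (shift (w i) A)"
proof -
  have "Pow (insert i I) = Pow I \<union> insert i ` Pow I" by (rule Pow_insert)
  have disj: "Pow I \<inter> insert i ` Pow I = {}" using assms by auto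
  have inj: "inj_on (insert i) (Pow I)" using assms by (auto simp: inj_on_def)
  have "Dop (insert i I) w \<phi> A = (\<Sum>S\<in>Pow I. (-1) ^ card S * \<phi> (shift (\<Sum>j\<in>S. w j) A))
      + (\<Sum>S\<in>insert i ` Pow I. (-1) ^ card S * \<phi> (shift (\<Sum>j\<in>S. w j) A))"
    unfolding Dop_def Pow_insert using assms disj by (intro sum.union_disjoint) auto
  also have "(\<Sum>S\<in>insert i ` Pow I. (-1) ^ card S * \<phi> (shift (\<Sum>j\<in>S. w j) A))
     = (\<Sum>S\<in>Pow I. (-1) ^ card (insert i S) * \<phi> (shift (\<Sum>j\<in>insert i S. w j) A))"
    using inj by (simp add: sum.reindex)
  also have "\<dots> = (\<Sum>S\<in>Pow I. - ((-1) ^ card S * \<phi> (shift (\<Sum>j\<in>S. w j) (shift (w i) A))))"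
  proof (rule sum.cong[OF refl])
    fix S assume S: "S \<in> Pow I"
    then have fS: "finite S" "i \<notin> S" using assms finite_subset by auto
    show "(-1) ^ card (insert i S) * \<phi> (shift (\<Sum>j\<in>insert i S. w j) A) =
          - ((-1) ^ card S * \<phi> (shift (\<Sum>j\<in>S. w j) (shift (w i) A)))"
      using fS by (simp add: shift_shift add.commute)
  qed
  finally show ?thesis by (simp add: Dop_def sum_negf)
qed

lemma Dop_union:
  assumes "finite I" "finite J" "I \<inter> J = {}"
  shows "Dop (I \<union> J) w \<phi> A = Dop I w (Dop J w \<phi>) A"
  using assms
proof (induction I arbitrary: A rule: finite_induct)
  case empty
  then show ?case by (simp add: Dop_def)
next
  case (insert i I)
  have "Dop (insert i I \<union> J) w \<phi> A = Dop (insert i (I \<union> J)) w \<phi> A" by simp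
  also have "\<dots> = Dop (I \<union> J) w \<phi> A - Dop (I \<union> J) w \<phi> (shift (w i) A)"
    using insert by (intro Dop_insert) auto
  also have "\<dots> = Dop I w (Dop J w \<phi>) A - Dop I w (Dop J w \<phi>) (shift (w i) A)"
    using insert by simp
  also have "\<dots> = Dop (insert i I) w (Dop J w \<phi>) A"
    using insert by (simp add: Dop_insert)
  finally show ?case .
qed

lemma Dop_zero:
  assumes "\<forall>B \<in> sets borel. bounded B \<longrightarrow> \<phi> B = 0" "A \<in> sets borel" "bounded A"
  shows "Dop I w \<phi> (A::'a::euclidean_space set) = 0"
  unfolding Dop_def using assms by (intro sum.neutral) (auto simp: shift_bounded shift_borel)

lemma Dop_sum:
  "Dop I w (\<lambda>A. \<Sum>t\<in>T. \<phi> t A) A = (\<Sum>t\<in>T. Dop I w (\<phi> t) A)"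
  unfolding Dop_def by (simp add: sum_distrib_left sum.swap[of _ T])

lemma Dop_reindex:
  assumes "inj_on f I" "finite I"
  shows "Dop (f ` I) w \<phi> A = Dop I (\<lambda>i. w (f i)) \<phi> A"
proof -
  have P: "Pow (f ` I) = image f ` Pow I" by (rule image_Pow_surj[symmetric]) simp
  have "Dop (f ` I) w \<phi> A = (\<Sum>S\<in>Pow I. (-1) ^ card (f ` S) * \<phi> (shift (\<Sum>j\<in>f ` S. w j) A))"
    unfolding Dop_def P using assms by (simp add: sum.reindex inj_on_image_Pow)
  also have "\<dots> = Dop I (\<lambda>i. w (f i)) \<phi> A" unfolding Dop_def
  proof (rule sum.cong[OF refl])
    fix S assume "S \<in> Pow I"
    then have "inj_on f S" using assms inj_on_subset by blast
    then show "(-1) ^ card (f ` S) * \<phi> (shift (\<Sum>j\<in>f ` S. w j) A) =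
      (-1) ^ card S * \<phi> (shift (\<Sum>j\<in>S. w (f j)) A)" by (simp add: card_image sum.reindex)
  qed
  finally show ?thesis .
qed



definition far_zero :: "(real^'n) set \<Rightarrow> real \<Rightarrow> ((real^'n) set \<Rightarrow> real) \<Rightarrow> bool" where
  "far_zero P r \<phi> \<longleftrightarrow> (\<forall>A\<in>sets borel. bounded A \<longrightarrow> (\<forall>a\<in>A. r \<le> infdist a P) \<longrightarrow> \<phi> A = 0)"

lemma Dop_far:
  fixes P :: "(real^'n) set"
  assumes "finite I" "far_zero P r \<phi>"
  shows "far_zero P (r + (\<Sum>j\<in>I. norm (w j))) (Dop I w \<phi>)"
  unfolding far_zero_def
proof (intro ballI impI)
  fix A :: "(real^'n) set" assume A: "A \<in> sets borel" "bounded A"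
    and far: "\<forall>a\<in>A. r + (\<Sum>j\<in>I. norm (w j)) \<le> infdist a P"
  show "Dop I w \<phi> A = 0" unfolding Dop_def
  proof (intro sum.neutral ballI)
    fix S assume S: "S \<in> Pow I"
    have b: "shift (sum w S) A \<in> sets borel" "bounded (shift (sum w S) A)"
        using A by (auto simp: shift_borel shift_bounded)
    have c: "\<forall>a\<in>shift (sum w S) A. r \<le> infdist a P"
      proof
        fix x assume "x \<in> shift (sum w S) A"
        then have xa: "x + sum w S \<in> A" by (simp add: shift_def)
        have "norm (sum w S) \<le> (\<Sum>j\<in>S. norm (w j))" by (rule norm_sum)
        also have "\<dots> \<le> (\<Sum>j\<in>I. norm (w j))"
          using S assms(1) by (intro sum_mono2) auto
        finally have n: "norm (sum w S) \<le> (\<Sum>j\<in>I. norm (w j))" .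
        have "infdist (x + sum w S) P \<le> infdist x P + dist (x + sum w S) x"
          by (rule infdist_triangle)
        moreover have "dist (x + sum w S) x = norm (sum w S)" by (simp add: dist_norm)
        ultimately show "r \<le> infdist x P" using far xa n by force
      qed
    have "\<phi> (shift (sum w S) A) = 0" using assms(2) b c unfolding far_zero_def by blast
    then show "(-1) ^ card S * \<phi> (shift (sum w S) A) = 0" by simp
  qed
qed

lemma infdist_scale:
  assumes "convex_cone P" "(c::real) \<ge> 0"
  shows "c * infdist (y::'a::real_normed_vector) P \<le> infdist (c *\<^sub>R y) P"
proof (cases "c = 0")
  case True then show ?thesis by (simp add: infdist_nonneg)
next
  case False
  then have c: "c > 0" using assms by simp
  have ne: "P \<noteq> {}" using assms unfolding convex_cone_def by simp
  have sc: "\<And>x d. x \<in> P \<Longrightarrow> d \<ge> 0 \<Longrightarrow> d *\<^sub>R x \<in> P" using assms(1) unfolding convex_cone_iff by blast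
  show ?thesis
    unfolding infdist_notempty[OF ne]
  proof (rule cINF_greatest[OF ne])
    fix p assume p: "p \<in> P"
    have "(1/c) *\<^sub>R p \<in> P" using sc[OF p] c by simp
    then have "infdist y P \<le> dist y ((1/c) *\<^sub>R p)" by (rule infdist_le)
    moreover have "dist (c *\<^sub>R y) p = c * dist y ((1/c) *\<^sub>R p)"
    proof -
      have "c *\<^sub>R y - p = c *\<^sub>R (y - (1/c) *\<^sub>R p)" using c by (simp add: algebra_simps)
      then have "dist (c *\<^sub>R y) p = norm (c *\<^sub>R (y - (1/c) *\<^sub>R p))" by (simp add: dist_norm)
      then show ?thesis using c by (simp add: dist_norm)
    qed
    ultimately have "c * infdist y P \<le> dist (c *\<^sub>R y) p" using c by simp
    then show "c * (INF a\<in>P. dist y a) \<le> dist (c *\<^sub>R y) p" unfolding infdist_notempty[OF ne] .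
  qed
qed

lemma escape:
  fixes P :: "(real^'n) set"
  assumes pc: "pointy_cone P" and v: "v \<noteq> 0" and fz: "far_zero P r \<psi>"
    and inv: "\<forall>B\<in>sets borel. bounded B \<longrightarrow> \<psi> B = \<psi> (shift v B)"
    and A: "A \<in> sets borel" "bounded A"
  shows "\<psi> A = 0"
proof -
  have cc: "convex_cone P" and cl: "closed P" and pt: "\<And>x. x \<in> P \<Longrightarrow> - x \<in> P \<Longrightarrow> x = 0"
    using pc unfolding pointy_cone_def by auto
  have ne: "P \<noteq> {}" using cc unfolding convex_cone_def by simp
  have inv': "\<forall>B\<in>sets borel. bounded B \<longrightarrow> \<psi> B = \<psi> (shift (-v) B)"
  proof (intro ballI impI)
    fix B :: "(real^'n) set" assume "B \<in> sets borel" "bounded B"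
    then have "\<psi> (shift (-v) B) = \<psi> (shift v (shift (-v) B))"
      using inv by (simp add: shift_borel shift_bounded)
    then show "\<psi> B = \<psi> (shift (-v) B)" by (simp add: shift_shift)
  qed
  obtain u where u: "- u \<notin> P" "\<forall>B\<in>sets borel. bounded B \<longrightarrow> \<psi> B = \<psi> (shift u B)"
  proof (cases "- v \<in> P")
    case True
    then have "v \<notin> P" using pt v by blast
    then show ?thesis using that[of "-v"] inv' by simp
  next
    case False then show ?thesis using that[of v] inv by simp
  qed
  have iter: "\<psi> A = \<psi> (shift (real n *\<^sub>R u) A)" for n :: nat
  proof (induction n)
    case 0 then show ?case by simp
  next
    case (Suc n)
    have "shift (real (Suc n) *\<^sub>R u) A = shift u (shift (real n *\<^sub>R u) A)"
      by (simp add: shift_shift algebra_simps)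
    moreover have "\<psi> (shift (real n *\<^sub>R u) A) = \<psi> (shift u (shift (real n *\<^sub>R u) A))"
      using u(2) A by (simp add: shift_borel shift_bounded)
    ultimately show ?case using Suc by simp
  qed
  have d: "infdist (-u) P > 0" using infdist_pos_not_in_closed[OF cl ne u(1)] .
  obtain M where M: "\<forall>a\<in>A. norm a \<le> M" using A(2) unfolding bounded_iff by blast
  obtain n :: nat where n: "(\<bar>r\<bar> + \<bar>M\<bar>) / infdist (-u) P < n" using reals_Archimedean2 by blast
  have nd: "r + M \<le> real n * infdist (-u) P"
  proof -
    have "\<bar>r\<bar> + \<bar>M\<bar> < real n * infdist (-u) P" using n d by (simp add: pos_divide_less_eq)
    then show ?thesis by linarith
  qed
  have b: "shift (real n *\<^sub>R u) A \<in> sets borel" "bounded (shift (real n *\<^sub>R u) A)"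
      using A by (auto simp: shift_borel shift_bounded)
  have c: "\<forall>a\<in>shift (real n *\<^sub>R u) A. r \<le> infdist a P"
    proof
      fix x assume "x \<in> shift (real n *\<^sub>R u) A"
      then have xa: "x + real n *\<^sub>R u \<in> A" by (simp add: shift_def)
      have "infdist (real n *\<^sub>R (-u)) P \<le> infdist x P + dist (real n *\<^sub>R (-u)) x"
        by (rule infdist_triangle)
      moreover have "dist (real n *\<^sub>R (-u)) x = norm (x + real n *\<^sub>R u)"
        by (simp add: dist_norm norm_minus_commute algebra_simps)
      moreover have "real n * infdist (-u) P \<le> infdist (real n *\<^sub>R (-u)) P"
        by (rule infdist_scale[OF cc]) simp
      ultimately show "r \<le> infdist x P" using M xa nd by force
    qed
  have "\<psi> (shift (real n *\<^sub>R u) A) = 0" using fz b c unfolding far_zero_def by blast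
  then show ?thesis using iter by simp
qed

lemma kill:
  fixes P :: "(real^'n) set"
  assumes "finite I" "\<forall>i\<in>I. w i \<noteq> 0" "pointy_cone P"
  shows "far_zero P r \<phi> \<Longrightarrow> (\<forall>B\<in>sets borel. bounded B \<longrightarrow> Dop I w \<phi> B = 0)
     \<Longrightarrow> (\<forall>B\<in>sets borel. bounded B \<longrightarrow> \<phi> B = 0)"
  using assms(1,2)
proof (induction I arbitrary: r \<phi> rule: finite_induct)
  case empty
  then show ?case by (simp add: Dop_def)
next
  case (insert i I)
  let ?\<psi> = "Dop I w \<phi>"
  have fz: "far_zero P (r + (\<Sum>j\<in>I. norm (w j))) ?\<psi>" using Dop_far insert by blast
  have inv: "\<forall>B\<in>sets borel. bounded B \<longrightarrow> ?\<psi> B = ?\<psi> (shift (w i) B)"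
  proof (intro ballI impI)
    fix B :: "(real^'n) set" assume "B \<in> sets borel" "bounded B"
    then have "Dop (insert i I) w \<phi> B = 0" using insert(5) by blast
    then show "?\<psi> B = ?\<psi> (shift (w i) B)" using Dop_insert[OF insert(1,2), of w \<phi> B] by simp
  qed
  have "\<forall>B\<in>sets borel. bounded B \<longrightarrow> ?\<psi> B = 0"
    using escape[OF assms(3) _ fz inv] insert(6) by simp
  then show ?case using insert by blast
qed



definition pp :: "real^'n \<Rightarrow> (real^'n) list \<Rightarrow> (nat \<Rightarrow> real) \<Rightarrow> real^'n" where
  "pp \<mu> v z = \<mu> + (\<Sum>i<length v. z i *\<^sub>R v ! i)"

abbreviation Mk :: "nat \<Rightarrow> (nat \<Rightarrow> real) measure" where
  "Mk k \<equiv> PiM {..<k} (\<lambda>_. lborel)"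

lemma pp_meas[measurable]: "pp \<mu> v \<in> borel_measurable (Mk (length v))"
  unfolding pp_def by measurable

lemma orth_pred[measurable]: "Measurable.pred (Mk k) (\<lambda>x. \<forall>i<k. 0 \<le> x i)"
  by measurable

lemma orth_meas[measurable]: "(indicator {x. \<forall>i<k. 0 \<le> x i} :: _ \<Rightarrow> ennreal) \<in> borel_measurable (Mk k)"
proof -
  have "(\<lambda>x. indicator {x. \<forall>i<k. 0 \<le> x i} x :: ennreal) = (\<lambda>x. if \<forall>i<k. 0 \<le> x i then 1 else 0)"
    by (auto simp: indicator_def)
  also have "\<dots> \<in> borel_measurable (Mk k)" by measurable
  finally show ?thesis .
qed

lemma cone_emeasure:
  assumes X: "X \<in> sets borel"
  shows "emeasure (cone_measure \<mu> ls) X =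
    (\<integral>\<^sup>+ x. indicator {x. \<forall>i<length ls. 0 \<le> x i} x * indicator X (pp \<mu> ls x) \<partial>Mk (length ls))"
proof -
  let ?M = "Mk (length ls)"
  let ?f = "indicator {x. \<forall>i<length ls. 0 \<le> x i} :: (nat \<Rightarrow> real) \<Rightarrow> ennreal"
  have cm: "cone_measure \<mu> ls = distr (density ?M ?f) borel (pp \<mu> ls)"
    unfolding cone_measure_def pp_def by simp
  have pm: "pp \<mu> ls \<in> measurable (density ?M ?f) borel"
    by simp
  have "emeasure (cone_measure \<mu> ls) X = emeasure (density ?M ?f) (pp \<mu> ls -` X \<inter> space (density ?M ?f))"
    unfolding cm using pm X by (rule emeasure_distr)
  also have "\<dots> = (\<integral>\<^sup>+ x. ?f x * indicator (pp \<mu> ls -` X \<inter> space ?M) x \<partial>?M)"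
    using X by (subst emeasure_density) auto
  also have "\<dots> = (\<integral>\<^sup>+ x. ?f x * indicator X (pp \<mu> ls x) \<partial>?M)"
    by (intro nn_integral_cong) (auto simp: indicator_def)
  finally show ?thesis .
qed
interpretation lb: product_sigma_finite "\<lambda>_::nat. lborel :: real measure"
  by unfold_locales

lemma emeasure_Mk_box:
  "emeasure (Mk k) (PiE {..<k} (\<lambda>_. {0..c})) = (\<Prod>i<k. emeasure lborel {0..c::real})"
  by (rule lb.emeasure_PiM) auto

lemma cone_finite:
  assumes hs: "in_open_halfspace ls" and X: "X \<in> sets borel" "bounded X"
  shows "emeasure (cone_measure \<mu> ls) X < \<infinity>"
proof -
  let ?k = "length ls"
  obtain \<xi> where \<xi>: "\<forall>l\<in>set ls. \<xi> \<bullet> l > 0" using hs unfolding in_open_halfspace_def by blast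
  obtain R where R: "\<forall>x\<in>X. norm x \<le> R" using X(2) unfolding bounded_iff by blast
  define m where "m = Min (insert 1 ((\<lambda>l. \<xi> \<bullet> l) ` set ls))"
  have m0: "m > 0" unfolding m_def using \<xi> by (subst Min_gr_iff) auto
  have ml: "m \<le> \<xi> \<bullet> l" if "l \<in> set ls" for l unfolding m_def using that by (intro Min_le) auto
  define c where "c = (norm \<xi> * R + \<bar>\<xi> \<bullet> \<mu>\<bar>) / m"
  have bnd: "x j \<le> c" if x: "\<forall>i<?k. 0 \<le> x i" "pp \<mu> ls x \<in> X" and j: "j < ?k" for x j
  proof -
    have "\<xi> \<bullet> pp \<mu> ls x = \<xi> \<bullet> \<mu> + (\<Sum>i<?k. x i * (\<xi> \<bullet> ls ! i))"
      unfolding pp_def by (simp add: inner_add_right inner_sum_right)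
    moreover have "x j * (\<xi> \<bullet> ls ! j) \<le> (\<Sum>i<?k. x i * (\<xi> \<bullet> ls ! i))"
    proof (rule member_le_sum)
      fix i assume "i \<in> {..<?k} - {j}"
      then have "0 \<le> \<xi> \<bullet> ls ! i" "0 \<le> x i" using \<xi> x(1) by (auto intro: less_imp_le)
      then show "0 \<le> x i * (\<xi> \<bullet> ls ! i)" by simp
    qed (use j in auto)
    moreover have "x j * m \<le> x j * (\<xi> \<bullet> ls ! j)"
      using j x(1) ml by (intro mult_left_mono) auto
    moreover have "\<xi> \<bullet> pp \<mu> ls x \<le> norm \<xi> * R"
    proof -
      have "\<xi> \<bullet> pp \<mu> ls x \<le> norm \<xi> * norm (pp \<mu> ls x)" by (rule norm_cauchy_schwarz)
      also have "\<dots> \<le> norm \<xi> * R" using R x(2) by (intro mult_left_mono) auto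
      finally show ?thesis .
    qed
    ultimately have "x j * m \<le> norm \<xi> * R + \<bar>\<xi> \<bullet> \<mu>\<bar>" by linarith
    then show ?thesis unfolding c_def using m0 by (simp add: pos_le_divide_eq)
  qed
  have "emeasure (cone_measure \<mu> ls) X =
    (\<integral>\<^sup>+ x. indicator {x. \<forall>i<?k. 0 \<le> x i} x * indicator X (pp \<mu> ls x) \<partial>Mk ?k)"
    using X(1) by (rule cone_emeasure)
  also have "\<dots> \<le> (\<integral>\<^sup>+ x. indicator (PiE {..<?k} (\<lambda>_. {0..c})) x \<partial>Mk ?k)"
  proof (rule nn_integral_mono)
    fix x assume x: "x \<in> space (Mk ?k)"
    show "indicator {x. \<forall>i<?k. 0 \<le> x i} x * indicator X (pp \<mu> ls x) \<le> (indicator (PiE {..<?k} (\<lambda>_. {0..c})) x :: ennreal)"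
    proof (cases "(\<forall>i<?k. 0 \<le> x i) \<and> pp \<mu> ls x \<in> X")
      case True
      then have "x \<in> PiE {..<?k} (\<lambda>_. {0..c})" using x bnd by (auto simp: space_PiM PiE_iff)
      then show ?thesis using True by simp
    next
      case False then show ?thesis by (auto simp: indicator_def)
    qed
  qed
  also have "\<dots> = emeasure (Mk ?k) (PiE {..<?k} (\<lambda>_. {0..c}))"
    by (intro nn_integral_indicator sets_PiM_I_finite) auto
  also have "\<dots> < \<infinity>" unfolding emeasure_Mk_box by (simp add: emeasure_lborel_Icc_eq ennreal_power less_top[symmetric])
  finally show ?thesis .
qed


lemma lborel_pm_distr:
  assumes a: "a = 1 \<or> a = (-1::real)"
  shows "distr lborel borel (\<lambda>x. b + a * x) = lborel"
proof -
  have "lborel = density (distr lborel borel (\<lambda>x. b + a * x)) (\<lambda>_. ennreal \<bar>a\<bar>)"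
    using a by (intro lborel_real_affine) auto
  also have "(\<lambda>_. ennreal \<bar>a\<bar>) = (\<lambda>_. 1)" using a by auto
  finally show ?thesis by (simp add: density_1)
qed

lemma lborel_pm_preimage:
  assumes a: "a = 1 \<or> a = (-1::real)" and X: "X \<in> sets borel"
  shows "emeasure lborel {t. a * t + b \<in> X} = emeasure lborel X"
proof -
  have "emeasure lborel X = emeasure (distr lborel borel (\<lambda>x. b + a * x)) X"
    using lborel_pm_distr[OF a] by simp
  also have "\<dots> = emeasure lborel ((\<lambda>x. b + a * x) -` X \<inter> space lborel)"
    using X by (intro emeasure_distr) auto
  also have "(\<lambda>x. b + a * x) -` X \<inter> space lborel = {t. a * t + b \<in> X}" by (auto simp: add.commute)
  finally show ?thesis by simp
qed

lemma Mk_preserve: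
  fixes a b :: "nat \<Rightarrow> real"
  assumes p: "\<pi> permutes {..<k}" and a: "\<forall>i<k. a i = 1 \<or> a i = -1"
  shows "distr (Mk k) (Mk k) (\<lambda>x. \<lambda>i\<in>{..<k}. a i * x (\<pi> i) + b i) = Mk k"
proof (rule lb.PiM_eqI)
  let ?T = "\<lambda>x. \<lambda>i\<in>{..<k}. a i * x (\<pi> i) + b i"
  have pin: "\<pi> i < k" if "i < k" for i using permutes_in_image[OF p] that by simp
  have Tm: "?T \<in> measurable (Mk k) (Mk k)"
  proof (rule measurable_restrict)
    fix i assume i: "i \<in> {..<k}"
    then have "\<pi> i \<in> {..<k}" using pin by simp
    then show "(\<lambda>x. a i * x (\<pi> i) + b i) \<in> measurable (Mk k) lborel" by measurable
  qed
  show "finite {..<k}" by simp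
  show "sets (distr (Mk k) (Mk k) ?T) = sets (Mk k)" by simp
  fix A :: "nat \<Rightarrow> real set" assume A: "\<And>i. i \<in> {..<k} \<Longrightarrow> A i \<in> sets lborel"
  let ?q = "inv \<pi>"
  have qp: "\<pi> (?q j) = j" "?q (\<pi> j) = j" for j using permutes_inverses[OF p] by auto
  have qin: "?q j < k" if "j < k" for j using permutes_in_image[OF permutes_inv[OF p]] that by simp
  have "emeasure (distr (Mk k) (Mk k) ?T) (PiE {..<k} A) = emeasure (Mk k) (?T -` PiE {..<k} A \<inter> space (Mk k))"
    using A Tm by (intro emeasure_distr sets_PiM_I_finite) auto
  also have "?T -` PiE {..<k} A \<inter> space (Mk k) = PiE {..<k} (\<lambda>j. {t. a (?q j) * t + b (?q j) \<in> A (?q j)})"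
  proof (intro set_eqI iffI)
    fix x assume "x \<in> ?T -` PiE {..<k} A \<inter> space (Mk k)"
    then have x: "x \<in> PiE {..<k} (\<lambda>_. UNIV)" "\<And>i. i < k \<Longrightarrow> a i * x (\<pi> i) + b i \<in> A i"
      by (auto simp: space_PiM PiE_iff)
    show "x \<in> PiE {..<k} (\<lambda>j. {t. a (?q j) * t + b (?q j) \<in> A (?q j)})"
      using x(1) x(2)[OF qin] qp by (auto simp: PiE_iff)
  next
    fix x assume x: "x \<in> PiE {..<k} (\<lambda>j. {t. a (?q j) * t + b (?q j) \<in> A (?q j)})"
    have "a i * x (\<pi> i) + b i \<in> A i" if "i < k" for i
    proof -
      have "x (\<pi> i) \<in> {t. a (?q (\<pi> i)) * t + b (?q (\<pi> i)) \<in> A (?q (\<pi> i))}"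
        using x pin[OF that] by (auto simp: PiE_iff)
      then show ?thesis using qp(2)[of i] by simp
    qed
    then show "x \<in> ?T -` PiE {..<k} A \<inter> space (Mk k)"
      using x by (auto simp: space_PiM PiE_iff)
  qed
  also have "emeasure (Mk k) (PiE {..<k} (\<lambda>j. {t. a (?q j) * t + b (?q j) \<in> A (?q j)}))
     = (\<Prod>j<k. emeasure lborel {t. a (?q j) * t + b (?q j) \<in> A (?q j)})"
  proof (rule lb.emeasure_PiM)
    fix j assume "j \<in> {..<k}"
    then have "A (?q j) \<in> sets borel" using A qin by auto
    then show "{t. a (?q j) * t + b (?q j) \<in> A (?q j)} \<in> sets lborel" by measurable
  qed simp
  also have "\<dots> = (\<Prod>j<k. emeasure lborel (A (?q j)))"
    using A qin a by (intro prod.cong refl lborel_pm_preimage) auto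
  also have "\<dots> = (\<Prod>i<k. emeasure lborel (A i))"
    using prod.permute[OF permutes_inv[OF p], of "\<lambda>i. emeasure lborel (A i)"] by (simp add: comp_def)
  finally show "emeasure (distr (Mk k) (Mk k) ?T) (PiE {..<k} A) = (\<Prod>i\<in>{..<k}. emeasure lborel (A i))" .
qed



definition sg :: "bool list \<Rightarrow> nat \<Rightarrow> real" where "sg bs j = (if bs ! j then -1 else 1)"
definition ind :: "nat set \<Rightarrow> nat \<Rightarrow> real" where "ind S j = (if j \<in> S then 1 else 0)"
definition stp :: "real \<Rightarrow> real \<Rightarrow> real" where "stp \<sigma> t = (if 0 \<le> \<sigma> * t then 1 else 0)"
definition Hf :: "bool list \<Rightarrow> (real^'n) list \<Rightarrow> real^'n \<Rightarrow> (real^'n) set \<Rightarrow> nat set \<Rightarrow> (nat \<Rightarrow> real) \<Rightarrow> real" where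
  "Hf bs v \<mu> B S z = (\<Prod>j<length v. stp (sg bs j) (z j - ind S j)) * indicator B (pp \<mu> v z)"

lemma sg_sq[simp]: "sg bs j * sg bs j = 1" by (simp add: sg_def)
lemma sg_pm: "sg bs j = 1 \<or> sg bs j = -1" by (simp add: sg_def)

lemma prod_01: "finite A \<Longrightarrow> (\<Prod>j\<in>A. if P j then 1 else 0 :: 'a::comm_semiring_1) = (if \<forall>j\<in>A. P j then 1 else 0)"
  by (induction A rule: finite_induct) auto

lemma Hf_meas[measurable]: "B \<in> sets borel \<Longrightarrow> Hf bs v \<mu> B S \<in> borel_measurable (Mk (length v))"
proof -
  assume B: "B \<in> sets borel"
  have 1: "(\<lambda>z. \<Prod>j<length v. stp (sg bs j) (z j - ind S j)) \<in> borel_measurable (Mk (length v))"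
  proof (rule borel_measurable_prod)
    fix j assume "j \<in> {..<length v}"
    then show "(\<lambda>z. stp (sg bs j) (z j - ind S j)) \<in> borel_measurable (Mk (length v))"
      unfolding stp_def by measurable
  qed
  have 2: "(\<lambda>z. indicator B (pp \<mu> v z) :: real) \<in> borel_measurable (Mk (length v))"
    using B by measurable
  show ?thesis unfolding Hf_def using 1 2 by (rule borel_measurable_times)
qed

lemma sum_ind: "S \<subseteq> {..<k} \<Longrightarrow> (\<Sum>j<k. ind S j *\<^sub>R (f j :: 'a::real_vector)) = (\<Sum>j\<in>S. f j)"
proof -
  assume S: "S \<subseteq> {..<k}"
  have "(\<Sum>j<k. ind S j *\<^sub>R f j) = (\<Sum>j<k. if j \<in> S then f j else 0)" by (intro sum.cong) (auto simp: ind_def)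
  also have "\<dots> = sum f ({..<k} \<inter> S)" by (simp add: sum.inter_restrict)
  also have "{..<k} \<inter> S = S" using S by auto
  finally show ?thesis .
qed

lemma cone_shift:
  assumes len: "length bs = length v"
    and ms: "mset ls = mset (map2 (\<lambda>b l. if b then - l else l) bs v)"
    and S: "S \<subseteq> {..<length v}" and B: "B \<in> sets borel"
  shows "emeasure (cone_measure \<mu> ls) (shift (\<Sum>j\<in>S. v ! j) B) =
         (\<integral>\<^sup>+ z. ennreal (Hf bs v \<mu> B S z) \<partial>Mk (length v))"
proof -
  define k where "k = length v"
  define ls2 where "ls2 = map2 (\<lambda>b l. if b then - l else l) bs v"
  have l2: "length ls2 = k" unfolding ls2_def k_def using len by simp
  have l2n: "ls2 ! j = sg bs j *\<^sub>R v ! j" if "j < k" for j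
    using that len unfolding ls2_def k_def sg_def by simp
  obtain \<pi> where p: "\<pi> permutes {..<length ls2}" and pl: "permute_list \<pi> ls2 = ls"
    using mset_eq_permutation[OF ms[folded ls2_def]] by blast
  have p': "\<pi> permutes {..<k}" using p l2 by simp
  have lk: "length ls = k" using pl l2 by auto
  have lsn: "ls ! i = ls2 ! (\<pi> i)" if "i < k" for i
    using permute_list_nth[of \<pi> ls2 i] pl that l2 p by simp
  have pin: "\<pi> i < k" if "i < k" for i using permutes_in_image[OF p'] that by simp
  define X where "X = shift (\<Sum>j\<in>S. v ! j) B"
  have X: "X \<in> sets borel" unfolding X_def using B by (rule shift_borel)
  define a where "a i = sg bs (\<pi> i)" for i
  define b where "b i = - sg bs (\<pi> i) * ind S (\<pi> i)" for i
  define T where "T = (\<lambda>x. \<lambda>i\<in>{..<k}. a i * x (\<pi> i) + b i)"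
  have Tpres: "distr (Mk k) (Mk k) T = Mk k"
    unfolding T_def by (rule Mk_preserve[OF p']) (simp add: a_def sg_pm)
  have Tm: "T \<in> measurable (Mk k) (Mk k)"
    unfolding T_def
  proof (rule measurable_restrict)
    fix i assume i: "i \<in> {..<k}"
    then have "\<pi> i \<in> {..<k}" using pin by simp
    then show "(\<lambda>x. a i * x (\<pi> i) + b i) \<in> measurable (Mk k) lborel" by measurable
  qed
  let ?F = "\<lambda>x. indicator {x. \<forall>i<k. 0 \<le> x i} x * indicator X (pp \<mu> ls x) :: ennreal"
  have Fm: "?F \<in> borel_measurable (Mk k)"
  proof -
    have "pp \<mu> ls \<in> borel_measurable (Mk k)" using pp_meas[of \<mu> ls] lk by simp
    then show ?thesis using X by measurable
  qed
  have "emeasure (cone_measure \<mu> ls) X = (\<integral>\<^sup>+ x. ?F x \<partial>Mk k)"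
    using cone_emeasure[OF X, of \<mu> ls] lk by simp
  also have "\<dots> = (\<integral>\<^sup>+ x. ?F x \<partial>distr (Mk k) (Mk k) T)" unfolding Tpres ..
  also have "\<dots> = (\<integral>\<^sup>+ z. ?F (T z) \<partial>Mk k)"
    by (rule nn_integral_distr[OF Tm]) (subst measurable_cong_sets[OF sets_distr refl], rule Fm)
  also have "\<dots> = (\<integral>\<^sup>+ z. ennreal (Hf bs v \<mu> B S z) \<partial>Mk k)"
  proof (rule nn_integral_cong)
    fix z assume z: "z \<in> space (Mk k)"
    have Tz: "T z i = sg bs (\<pi> i) * (z (\<pi> i) - ind S (\<pi> i))" if "i < k" for i
      using that unfolding T_def a_def b_def by (simp add: algebra_simps)
    have "pp \<mu> ls (T z) = \<mu> + (\<Sum>i<k. (z (\<pi> i) - ind S (\<pi> i)) *\<^sub>R v ! (\<pi> i))"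
      unfolding pp_def lk
    proof (intro arg_cong2[where f="(+)"] refl sum.cong)
      fix i assume "i \<in> {..<k}"
      then have i: "i < k" by simp
      show "T z i *\<^sub>R ls ! i = (z (\<pi> i) - ind S (\<pi> i)) *\<^sub>R v ! (\<pi> i)"
      proof -
        have "T z i *\<^sub>R ls ! i = (sg bs (\<pi> i) * (z (\<pi> i) - ind S (\<pi> i)) * sg bs (\<pi> i)) *\<^sub>R v ! (\<pi> i)"
          using Tz[OF i] lsn[OF i] l2n[OF pin[OF i]] by simp
        also have "sg bs (\<pi> i) * (z (\<pi> i) - ind S (\<pi> i)) * sg bs (\<pi> i) = z (\<pi> i) - ind S (\<pi> i)"
          by (simp add: sg_def)
        finally show ?thesis .
      qed
    qed
    also have "(\<Sum>i<k. (z (\<pi> i) - ind S (\<pi> i)) *\<^sub>R v ! (\<pi> i)) = (\<Sum>j<k. (z j - ind S j) *\<^sub>R v ! j)"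
      using sum.permute[OF p', of "\<lambda>j. (z j - ind S j) *\<^sub>R v ! j"] by (simp add: comp_def)
    also have "\<dots> = (\<Sum>j<k. z j *\<^sub>R v ! j) - (\<Sum>j\<in>S. v ! j)"
      using S sum_ind[of S k "\<lambda>j. v ! j"] unfolding k_def by (simp add: scaleR_diff_left sum_subtractf)
    finally have ppT: "pp \<mu> ls (T z) + (\<Sum>j\<in>S. v ! j) = pp \<mu> v z" unfolding pp_def k_def by simp
    have orth: "(\<forall>i<k. 0 \<le> T z i) \<longleftrightarrow> (\<forall>j<k. 0 \<le> sg bs j * (z j - ind S j))"
    proof
      assume H: "\<forall>i<k. 0 \<le> T z i"
      show "\<forall>j<k. 0 \<le> sg bs j * (z j - ind S j)"
      proof (intro allI impI)
        fix j assume j: "j < k"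
        have "inv \<pi> j < k" using permutes_in_image[OF permutes_inv[OF p']] j by simp
        then have "0 \<le> T z (inv \<pi> j)" using H by simp
        then show "0 \<le> sg bs j * (z j - ind S j)"
          using Tz[OF \<open>inv \<pi> j < k\<close>] permutes_inverses(1)[OF p'] by simp
      qed
    next
      assume "\<forall>j<k. 0 \<le> sg bs j * (z j - ind S j)"
      then show "\<forall>i<k. 0 \<le> T z i" using Tz pin by simp
    qed
    have prodeq: "(\<Prod>j<k. stp (sg bs j) (z j - ind S j)) = (if \<forall>j<k. 0 \<le> sg bs j * (z j - ind S j) then 1 else 0)"
      unfolding stp_def using prod_01[of "{..<k}" "\<lambda>j. 0 \<le> sg bs j * (z j - ind S j)"] by auto
    show "?F (T z) = ennreal (Hf bs v \<mu> B S z)"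
      unfolding Hf_def k_def[symmetric] prodeq
      using orth ppT by (auto simp: indicator_def X_def shift_def)
  qed
  finally show ?thesis unfolding X_def k_def .
qed



lemma Hf_nonneg: "0 \<le> Hf bs v \<mu> B S z"
  unfolding Hf_def stp_def by (intro mult_nonneg_nonneg prod_nonneg) auto

lemma cone_shift_real:
  assumes len: "length bs = length v"
    and ms: "mset ls = mset (map2 (\<lambda>b l. if b then - l else l) bs v)"
    and hs: "in_open_halfspace ls"
    and S: "S \<subseteq> {..<length v}" and B: "B \<in> sets borel" "bounded B"
  shows "measure (cone_measure \<mu> ls) (shift (\<Sum>j\<in>S. v ! j) B) = (\<integral>z. Hf bs v \<mu> B S z \<partial>Mk (length v))"
    and "integrable (Mk (length v)) (Hf bs v \<mu> B S)"
proof -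
  have e: "emeasure (cone_measure \<mu> ls) (shift (\<Sum>j\<in>S. v ! j) B) = (\<integral>\<^sup>+ z. ennreal (Hf bs v \<mu> B S z) \<partial>Mk (length v))"
    using cone_shift[OF len ms S B(1)] .
  have fin: "emeasure (cone_measure \<mu> ls) (shift (\<Sum>j\<in>S. v ! j) B) < \<infinity>"
    using cone_finite[OF hs] B by (simp add: shift_borel shift_bounded)
  show "integrable (Mk (length v)) (Hf bs v \<mu> B S)"
    using fin B(1) unfolding e by (intro integrableI_nonneg) (auto simp: Hf_nonneg)
  show "measure (cone_measure \<mu> ls) (shift (\<Sum>j\<in>S. v ! j) B) = (\<integral>z. Hf bs v \<mu> B S z \<partial>Mk (length v))"
    unfolding measure_def e using B(1) by (subst integral_eq_nn_integral) (auto simp: Hf_nonneg)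
qed

lemma map2_replicate_False: "map2 (\<lambda>b l. if b then - l else l) (replicate (length v) False) v = v"
  by (induction v) auto

lemma alt_sum:
  assumes "finite I"
  shows "(\<Sum>S\<in>Pow I. (-1) ^ card S * (\<Prod>j\<in>I. stp (s j) (z j - ind S j)))
       = (\<Prod>j\<in>I. stp (s j) (z j) - stp (s j) (z j - 1))"
proof -
  have "(\<Prod>j\<in>I. stp (s j) (z j) - stp (s j) (z j - 1)) = (\<Prod>j\<in>I. (- stp (s j) (z j - 1)) + stp (s j) (z j))"
    by simp
  also have "\<dots> = (\<Sum>X\<in>Pow I. (\<Prod>j\<in>X. - stp (s j) (z j - 1)) * (\<Prod>j\<in>I - X. stp (s j) (z j)))"
    using assms by (rule prod_add)
  also have "\<dots> = (\<Sum>S\<in>Pow I. (-1) ^ card S * (\<Prod>j\<in>I. stp (s j) (z j - ind S j)))"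
  proof (rule sum.cong[OF refl])
    fix X assume X: "X \<in> Pow I"
    then have XI: "X \<subseteq> I" by simp
    have "(\<Prod>j\<in>I. stp (s j) (z j - ind X j)) = (\<Prod>j\<in>X. stp (s j) (z j - ind X j)) * (\<Prod>j\<in>I - X. stp (s j) (z j - ind X j))"
      using prod.subset_diff[OF XI assms, of "\<lambda>j. stp (s j) (z j - ind X j)"] by (simp add: mult.commute)
    also have "(\<Prod>j\<in>X. stp (s j) (z j - ind X j)) = (\<Prod>j\<in>X. stp (s j) (z j - 1))"
      by (intro prod.cong) (auto simp: ind_def)
    also have "(\<Prod>j\<in>I - X. stp (s j) (z j - ind X j)) = (\<Prod>j\<in>I - X. stp (s j) (z j))"
      by (intro prod.cong) (auto simp: ind_def)
    finally show "(\<Prod>j\<in>X. - stp (s j) (z j - 1)) * (\<Prod>j\<in>I - X. stp (s j) (z j)) =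
        (-1) ^ card X * (\<Prod>j\<in>I. stp (s j) (z j - ind X j))"
      by (simp add: prod_uminus)
  qed
  finally show ?thesis ..
qed

definition cb :: "real \<Rightarrow> real" where "cb t = (if 0 \<le> t \<and> t \<le> 1 then 1 else 0)"

lemma stp_diff: "s = 1 \<or> s = -1 \<Longrightarrow> t \<noteq> 0 \<Longrightarrow> t \<noteq> 1 \<Longrightarrow> stp s t - stp s (t - 1) = s * cb t"
  unfolding stp_def cb_def by auto

lemma AE_not01: "AE z in Mk k. \<forall>j\<in>{..<k}. z j \<noteq> 0 \<and> z j \<noteq> 1"
proof (rule AE_finite_allI)
  fix j assume j: "j \<in> {..<k}"
  let ?N = "PiE {..<k} (\<lambda>i. if i = j then {0,1} else UNIV) :: (nat \<Rightarrow> real) set"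
  have "emeasure (Mk k) ?N = (\<Prod>i<k. emeasure lborel (if i = j then {0,1} else UNIV :: real set))"
    by (rule lb.emeasure_PiM) auto
  also have "\<dots> = 0"
  proof (rule prod_zero)
    have "emeasure lborel {0,1::real} = 0" by (rule emeasure_lborel_countable) simp
    then show "\<exists>i\<in>{..<k}. emeasure lborel (if i = j then {0,1} else UNIV :: real set) = 0" using j by auto
  qed simp
  finally have "?N \<in> null_sets (Mk k)" by (auto intro!: sets_PiM_I_finite simp: null_sets_def)
  moreover have "{z \<in> space (Mk k). \<not> (z j \<noteq> 0 \<and> z j \<noteq> 1)} \<subseteq> ?N"
    using j by (auto simp: space_PiM PiE_iff extensional_def)
  ultimately show "AE z in Mk k. z j \<noteq> 0 \<and> z j \<noteq> 1" by (rule AE_I')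
qed simp

lemma sg_prod: "length bs = k \<Longrightarrow> (\<Prod>j<k. sg bs j) = (-1) ^ length (filter id bs)"
proof -
  assume k: "length bs = k"
  have "(\<Prod>j<k. sg bs j) = (\<Prod>j\<in>{j. j < k \<and> bs ! j}. -1) * (\<Prod>j\<in>{j. j < k \<and> \<not> bs ! j}. 1::real)"
  proof -
    have "{..<k} = {j. j < k \<and> bs ! j} \<union> {j. j < k \<and> \<not> bs ! j}" by auto
    then have "(\<Prod>j<k. sg bs j) = (\<Prod>j\<in>{j. j < k \<and> bs ! j}. sg bs j) * (\<Prod>j\<in>{j. j < k \<and> \<not> bs ! j}. sg bs j)"
      by (simp add: prod.union_disjoint[symmetric] disjoint_iff)
    also have "\<dots> = (\<Prod>j\<in>{j. j < k \<and> bs ! j}. -1) * (\<Prod>j\<in>{j. j < k \<and> \<not> bs ! j}. 1::real)"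
      by (intro arg_cong2[where f="(*)"] prod.cong) (auto simp: sg_def)
    finally show ?thesis .
  qed
  also have "\<dots> = (-1) ^ card {j. j < k \<and> bs ! j}" by simp
  also have "card {j. j < k \<and> bs ! j} = length (filter id bs)"
    using k by (simp add: length_filter_conv_card)
  finally show ?thesis .
qed

lemma alt_integral:
  assumes len: "length bs = length v"
    and ms: "mset ls = mset (map2 (\<lambda>b l. if b then - l else l) bs v)"
    and hs: "in_open_halfspace ls"
    and B: "B \<in> sets borel" "bounded B"
  shows "(\<Sum>S\<in>Pow {..<length v}. (-1) ^ card S * measure (cone_measure \<mu> ls) (shift (\<Sum>j\<in>S. v ! j) B))
       = (-1) ^ length (filter id bs) * (\<integral>z. (\<Prod>j<length v. cb (z j)) * indicator B (pp \<mu> v z) \<partial>Mk (length v))"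
proof -
  let ?k = "length v"
  have m1: "(\<lambda>z. \<Sum>S\<in>Pow {..<?k}. (-1) ^ card S * Hf bs v \<mu> B S z) \<in> borel_measurable (Mk ?k)"
    using B(1) by (intro borel_measurable_sum borel_measurable_times) auto
  have cbm: "(\<lambda>z. cb (z j)) \<in> borel_measurable (Mk ?k)" if "j < ?k" for j
  proof -
    have "(\<lambda>z. cb (z j)) = (\<lambda>z. indicator {0..1} (z j))" by (auto simp: cb_def indicator_def)
    also have "\<dots> \<in> borel_measurable (Mk ?k)"
      by (rule measurable_compose[OF measurable_component_singleton]) (use that in simp, measurable)
    finally show ?thesis .
  qed
  have m2: "(\<lambda>z. (-1) ^ length (filter id bs) * ((\<Prod>j<?k. cb (z j)) * indicator B (pp \<mu> v z))) \<in> borel_measurable (Mk ?k)"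
  proof -
    have "(\<lambda>z. \<Prod>j<?k. cb (z j)) \<in> borel_measurable (Mk ?k)" by (rule borel_measurable_prod) (use cbm in auto)
    moreover have "(\<lambda>z. indicator B (pp \<mu> v z) :: real) \<in> borel_measurable (Mk ?k)" using B(1) by measurable
    ultimately show ?thesis by (intro borel_measurable_times borel_measurable_const)
  qed
  have "(\<Sum>S\<in>Pow {..<?k}. (-1) ^ card S * measure (cone_measure \<mu> ls) (shift (\<Sum>j\<in>S. v ! j) B))
      = (\<Sum>S\<in>Pow {..<?k}. (\<integral>z. (-1) ^ card S * Hf bs v \<mu> B S z \<partial>Mk ?k))"
    using cone_shift_real(1)[OF len ms hs _ B] by (intro sum.cong) auto
  also have "\<dots> = (\<integral>z. (\<Sum>S\<in>Pow {..<?k}. (-1) ^ card S * Hf bs v \<mu> B S z) \<partial>Mk ?k)"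
    using cone_shift_real(2)[OF len ms hs _ B] by (intro Bochner_Integration.integral_sum[symmetric]) auto
  also have "\<dots> = (\<integral>z. (-1) ^ length (filter id bs) * ((\<Prod>j<?k. cb (z j)) * indicator B (pp \<mu> v z)) \<partial>Mk ?k)"
  proof (rule integral_cong_AE)
    show "AE z in Mk ?k. (\<Sum>S\<in>Pow {..<?k}. (-1) ^ card S * Hf bs v \<mu> B S z) =
       (-1) ^ length (filter id bs) * ((\<Prod>j<?k. cb (z j)) * indicator B (pp \<mu> v z))"
      using AE_not01[of ?k]
    proof eventually_elim
      case (elim z)
      have "(\<Sum>S\<in>Pow {..<?k}. (-1) ^ card S * Hf bs v \<mu> B S z)
          = (\<Sum>S\<in>Pow {..<?k}. (-1) ^ card S * (\<Prod>j<?k. stp (sg bs j) (z j - ind S j))) * indicator B (pp \<mu> v z)"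
        unfolding Hf_def by (simp add: sum_distrib_right mult.assoc)
      also have "\<dots> = (\<Prod>j<?k. stp (sg bs j) (z j) - stp (sg bs j) (z j - 1)) * indicator B (pp \<mu> v z)"
        by (subst alt_sum) auto
      also have "(\<Prod>j<?k. stp (sg bs j) (z j) - stp (sg bs j) (z j - 1)) = (\<Prod>j<?k. sg bs j * cb (z j))"
        using elim sg_pm by (intro prod.cong refl stp_diff) auto
      also have "\<dots> = (\<Prod>j<?k. sg bs j) * (\<Prod>j<?k. cb (z j))" by (rule prod.distrib)
      also have "(\<Prod>j<?k. sg bs j) = (-1) ^ length (filter id bs)" using len by (intro sg_prod) simp
      finally show ?case by simp
    qed
  qed (simp_all add: m1 m2)
  also have "\<dots> = (-1) ^ length (filter id bs) * (\<integral>z. (\<Prod>j<?k. cb (z j)) * indicator B (pp \<mu> v z) \<partial>Mk ?k)"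
    by (rule integral_mult_right_zero)
  finally show ?thesis .
qed



lemma lincomb_nth: "lincomb_val ts A = (\<Sum>i=0..<length ts. cone_term_val (ts ! i) A)"
  unfolding lincomb_val_def by (simp add: sum_list_sum_nth)

lemma valid_hs: "valid_cone_term (C, \<mu>, ls) \<Longrightarrow> in_open_halfspace ls"
  by (simp add: valid_cone_term_def)

lemma cone_term_add:
  assumes "valid_cone_term t" "A \<in> sets borel" "bounded A" "U \<in> sets borel"
  shows "cone_term_val t A = cone_term_val t (A \<inter> U) + cone_term_val t (A - U)"
proof -
  obtain C \<mu> ls where t: "t = (C, \<mu>, ls)" by (cases t) auto
  have hs: "in_open_halfspace ls" using assms(1) t valid_hs by simp
  let ?M = "cone_measure \<mu> ls"
  have sM: "sets ?M = sets borel" by (simp add: cone_measure_def)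
  have f1: "emeasure ?M (A \<inter> U) \<noteq> \<infinity>"
    using cone_finite[OF hs, of "A \<inter> U" \<mu>] assms bounded_subset[of A "A \<inter> U"] by auto
  have f2: "emeasure ?M (A - U) \<noteq> \<infinity>"
    using cone_finite[OF hs, of "A - U" \<mu>] assms bounded_subset[of A "A - U"] by auto
  have "measure ?M A = measure ?M ((A \<inter> U) \<union> (A - U))" by (simp add: Int_Diff_Un)
  also have "\<dots> = measure ?M (A \<inter> U) + measure ?M (A - U)"
    using f1 f2 assms sM by (intro measure_Union) auto
  finally show ?thesis unfolding t cone_term_val_def by (simp add: algebra_simps)
qed

lemma lincomb_add:
  assumes "\<forall>t\<in>set ts. valid_cone_term t" "A \<in> sets borel" "bounded A" "U \<in> sets borel"
  shows "lincomb_val ts A = lincomb_val ts (A \<inter> U) + lincomb_val ts (A - U)"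
  unfolding lincomb_nth
  using assms cone_term_add[OF _ assms(2-4)] by (simp add: sum.distrib[symmetric])

lemma lincomb_cover:
  assumes valid: "\<forall>t\<in>set ts. valid_cone_term t" and F: "finite F"
    and z: "\<forall>x\<in>F. \<forall>B\<in>sets borel. B \<subseteq> ball x (e x) \<longrightarrow> lincomb_val ts B = 0"
  shows "A \<in> sets borel \<Longrightarrow> bounded A \<Longrightarrow> A \<subseteq> (\<Union>x\<in>F. ball x (e x)) \<Longrightarrow> lincomb_val ts A = 0"
  using F z
proof (induction F arbitrary: A rule: finite_induct)
  case empty then show ?case by (simp add: lincomb_val_def cone_term_val_def)
next
  case (insert x F)
  have "lincomb_val ts A = lincomb_val ts (A \<inter> ball x (e x)) + lincomb_val ts (A - ball x (e x))"
    using lincomb_add[OF valid insert.prems(1,2)] by simp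
  moreover have "lincomb_val ts (A \<inter> ball x (e x)) = 0"
    using insert.prems(1,4) by auto
  moreover have "lincomb_val ts (A - ball x (e x)) = 0"
  proof (rule insert.IH)
    show "A - ball x (e x) \<in> sets borel" using insert.prems(1) by auto
    show "bounded (A - ball x (e x))" using insert.prems(2) by (rule bounded_subset) auto
    show "A - ball x (e x) \<subseteq> (\<Union>x\<in>F. ball x (e x))" using insert.prems(3) by auto
  qed (use insert.prems(4) in auto)
  ultimately show ?case by simp
qed

lemma val_far:
  fixes P :: "(real^'n) set"
  assumes valid: "\<forall>t\<in>set ts. valid_cone_term t" and sup: "lincomb_support ts \<subseteq> P"
    and ne: "P \<noteq> {}"
  shows "far_zero P 1 (lincomb_val ts)"
  unfolding far_zero_def
proof (intro ballI impI)
  fix A :: "(real^'n) set" assume A: "A \<in> sets borel" "bounded A" and far: "\<forall>a\<in>A. 1 \<le> infdist a P"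
  let ?K = "closure A"
  have K: "compact ?K" using A(2) by (simp add: compact_closure)
  have Kf: "1 \<le> infdist x P" if "x \<in> ?K" for x
  proof -
    have "closed {y. 1 \<le> infdist y P}"
      by (intro closed_Collect_le continuous_on_const continuous_on_infdist continuous_on_id)
    moreover have "A \<subseteq> {y. 1 \<le> infdist y P}" using far by auto
    ultimately have "?K \<subseteq> {y. 1 \<le> infdist y P}" by (rule closure_minimal[rotated])
    then show ?thesis using that by auto
  qed
  have "\<forall>x\<in>?K. \<exists>e>0. \<forall>B\<in>sets borel. B \<subseteq> ball x e \<longrightarrow> lincomb_val ts B = 0"
  proof
    fix x assume x: "x \<in> ?K"
    have "x \<notin> P" using Kf[OF x] by (auto dest: infdist_zero)
    then have "x \<notin> lincomb_support ts" using sup by auto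
    then show "\<exists>e>0. \<forall>B\<in>sets borel. B \<subseteq> ball x e \<longrightarrow> lincomb_val ts B = 0"
      unfolding lincomb_support_def by auto
  qed
  then obtain e where e: "\<forall>x\<in>?K. e x > 0 \<and> (\<forall>B\<in>sets borel. B \<subseteq> ball x (e x) \<longrightarrow> lincomb_val ts B = 0)"
    by metis
  have "?K \<subseteq> (\<Union>x\<in>?K. ball x (e x))" using e by force
  then obtain F where F: "F \<subseteq> ?K" "finite F" "?K \<subseteq> (\<Union>x\<in>F. ball x (e x))"
    using compactE_image[OF K, of ?K "\<lambda>x. ball x (e x)"] by auto
  show "lincomb_val ts A = 0"
  proof (rule lincomb_cover[OF valid F(2)])
    show "\<forall>x\<in>F. \<forall>B\<in>sets borel. B \<subseteq> ball x (e x) \<longrightarrow> lincomb_val ts B = 0" using e F(1) by blast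
    show "A \<subseteq> (\<Union>x\<in>F. ball x (e x))" using F(3) closure_subset by blast
  qed (use A in auto)
qed

lemma term_kill:
  assumes vf: "valid_cone_term (C, \<mu>, ls)" and vg: "valid_cone_term (D, \<mu>, v)"
    and len: "length bs = length v"
    and ms: "mset ls = mset (map2 (\<lambda>b l. if b then - l else l) bs v)"
    and Ceq: "C = (-1) ^ length (filter id bs) * D"
    and B: "B \<in> sets borel" "bounded B"
  shows "Dop {..<length v} (\<lambda>j. v ! j) (\<lambda>A. cone_term_val (C, \<mu>, ls) A - cone_term_val (D, \<mu>, v) A) B = 0"
proof -
  let ?k = "length v"
  let ?Q = "(\<integral>z. (\<Prod>j<?k. cb (z j)) * indicator B (pp \<mu> v z) \<partial>Mk ?k)"
  let ?n = "length (filter id bs)"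
  have hf: "in_open_halfspace ls" using vf valid_hs by blast
  have hg: "in_open_halfspace v" using vg valid_hs by blast
  have f: "(\<Sum>S\<in>Pow {..<?k}. (-1) ^ card S * measure (cone_measure \<mu> ls) (shift (\<Sum>j\<in>S. v ! j) B)) = (-1) ^ ?n * ?Q"
    by (rule alt_integral[OF len ms hf B])
  have g: "(\<Sum>S\<in>Pow {..<?k}. (-1) ^ card S * measure (cone_measure \<mu> v) (shift (\<Sum>j\<in>S. v ! j) B)) = ?Q"
    using alt_integral[of "replicate ?k False" v v, OF _ _ hg B] by (simp add: map2_replicate_False)
  have "Dop {..<?k} (\<lambda>j. v ! j) (\<lambda>A. cone_term_val (C, \<mu>, ls) A - cone_term_val (D, \<mu>, v) A) B
     = C * (\<Sum>S\<in>Pow {..<?k}. (-1) ^ card S * measure (cone_measure \<mu> ls) (shift (\<Sum>j\<in>S. v ! j) B))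
       - D * (\<Sum>S\<in>Pow {..<?k}. (-1) ^ card S * measure (cone_measure \<mu> v) (shift (\<Sum>j\<in>S. v ! j) B))"
    unfolding Dop_def cone_term_val_def by (simp add: sum_distrib_left sum_subtractf algebra_simps)
  also have "\<dots> = ((-1) ^ ?n * (-1) ^ ?n) * D * ?Q - D * ?Q" unfolding f g Ceq by (simp add: algebra_simps)
  also have "(-1::real) ^ ?n * (-1) ^ ?n = 1" by (simp add: power_mult_distrib[symmetric])
  finally show ?thesis by simp
qed



theorem lemma1:
  fixes fs gs :: "(real \<times> (real^'n::finite) \<times> (real^'n) list) list" and P :: "(real^'n) set"
  assumes "\<forall>t \<in> set fs. valid_cone_term t"
      and "\<forall>t \<in> set gs. valid_cone_term t"
      and "fourier_equiv fs gs"
      and "pointy_cone P"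
      and "lincomb_support fs \<subseteq> P"
      and "lincomb_support gs \<subseteq> P"
  shows "\<forall>A \<in> sets borel. bounded A \<longrightarrow> lincomb_val fs A = lincomb_val gs A"
proof -
  have ne: "P \<noteq> {}" using assms(4) unfolding pointy_cone_def convex_cone_def by simp
  define N where "N = length gs"
  have lenf: "length fs = N" using assms(3) unfolding fourier_equiv_def N_def by (rule list_all2_lengthD)
  have fe: "fourier_equiv_term (fs ! t) (gs ! t)" if "t < N" for t
    using assms(3) that lenf unfolding fourier_equiv_def N_def by (simp add: list_all2_conv_all_nth)
  define vs where "vs t = snd (snd (gs ! t))" for t
  define J where "J = (SIGMA t:{0..<N}. {..<length (vs t)})"
  define w where "w = (\<lambda>(t, j). vs t ! j)"
  define \<phi> where "\<phi> t A = cone_term_val (fs ! t) A - cone_term_val (gs ! t) A" for t A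
  define h where "h A = lincomb_val fs A - lincomb_val gs A" for A
  have h\<phi>: "h = (\<lambda>A. \<Sum>t\<in>{0..<N}. \<phi> t A)"
    unfolding h_def \<phi>_def lincomb_nth lenf N_def by (simp add: sum_subtractf fun_eq_iff)
  have finJ: "finite J" unfolding J_def by auto
  have wnz: "\<forall>i\<in>J. w i \<noteq> 0"
  proof
    fix i assume "i \<in> J"
    then obtain t j where i: "i = (t, j)" "t < N" "j < length (vs t)" unfolding J_def by auto
    have "gs ! t \<in> set gs" using i N_def by simp
    then have vv: "valid_cone_term (gs ! t)" using assms(2) by blast
    obtain C0 \<mu>0 l0 where g0: "gs ! t = (C0, \<mu>0, l0)" by (cases "gs ! t") auto
    have "in_open_halfspace (vs t)" using vv unfolding vs_def g0 by (simp add: valid_cone_term_def)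
    then obtain \<xi> where "\<forall>l\<in>set (vs t). \<xi> \<bullet> l > 0" unfolding in_open_halfspace_def by blast
    then have "\<xi> \<bullet> (vs t ! j) > 0" using i by simp
    then show "w i \<noteq> 0" using i unfolding w_def by auto
  qed
  have fz: "far_zero P 1 h"
  proof -
    have "far_zero P 1 (lincomb_val fs)" "far_zero P 1 (lincomb_val gs)"
      using val_far[OF assms(1,5) ne] val_far[OF assms(2,6) ne] by auto
    then show ?thesis unfolding far_zero_def h_def by auto
  qed
  have termz: "Dop J w (\<phi> t) B = 0" if t: "t \<in> {0..<N}" and B: "B \<in> sets borel" "bounded B" for t B
  proof -
    obtain C \<mu> ls where ft: "fs ! t = (C, \<mu>, ls)" by (cases "fs ! t") auto
    obtain D \<mu>' v where gt: "gs ! t = (D, \<mu>', v)" by (cases "gs ! t") auto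
    have vt: "vs t = v" unfolding vs_def gt by simp
    from fe[of t] t ft gt obtain bs where eq: "\<mu> = \<mu>'" "length bs = length v"
      "mset ls = mset (map2 (\<lambda>b l. if b then - l else l) bs v)"
      "C = (-1) ^ length (filter id bs) * D"
      unfolding fourier_equiv_term_def by auto
    have vf: "valid_cone_term (C, \<mu>, ls)" using assms(1) ft t lenf by (metis atLeastLessThan_iff nth_mem)
    have vg: "valid_cone_term (D, \<mu>, v)" using assms(2) gt t eq(1) N_def by (metis atLeastLessThan_iff nth_mem)
    define Jt where "Jt = Pair t ` {..<length v}"
    have JtJ: "Jt \<subseteq> J" unfolding Jt_def J_def vt[symmetric] using t by auto
    have JU: "J = (J - Jt) \<union> Jt" using JtJ by auto
    have zero: "\<forall>B'\<in>sets borel. bounded B' \<longrightarrow> Dop Jt w (\<phi> t) B' = 0"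
    proof (intro ballI impI)
      fix B' :: "(real^'n) set" assume B': "B' \<in> sets borel" "bounded B'"
      have "Dop Jt w (\<phi> t) B' = Dop {..<length v} (\<lambda>j. w (t, j)) (\<phi> t) B'"
        unfolding Jt_def by (rule Dop_reindex) (auto simp: inj_on_def)
      also have "(\<lambda>j. w (t, j)) = (\<lambda>j. v ! j)" using vt unfolding w_def by simp
      also have "Dop {..<length v} (\<lambda>j. v ! j) (\<phi> t) B' = 0"
      proof -
        have "\<phi> t = (\<lambda>A. cone_term_val (C, \<mu>, ls) A - cone_term_val (D, \<mu>, v) A)"
          unfolding \<phi>_def ft gt eq(1) by simp
        then show ?thesis using term_kill[OF vf vg eq(2,3,4) B'] by simp
      qed
      finally show "Dop Jt w (\<phi> t) B' = 0" .
    qed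
    have "Dop J w (\<phi> t) B = Dop (J - Jt) w (Dop Jt w (\<phi> t)) B"
      by (subst JU, rule Dop_union) (use finJ JtJ in \<open>auto intro: finite_subset\<close>)
    also have "\<dots> = 0" using Dop_zero[OF zero B] .
    finally show ?thesis .
  qed
  have "\<forall>B\<in>sets borel. bounded B \<longrightarrow> Dop J w h B = 0"
    unfolding h\<phi> Dop_sum using termz by simp
  then have "\<forall>B\<in>sets borel. bounded B \<longrightarrow> h B = 0"
    using kill[OF finJ wnz assms(4) fz] by blast
  then show ?thesis unfolding h_def by simp
qed

end
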